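(* Let $\zeta_5$ be a primitive $5$-th root of unity. (1) $\left\{\mathcal{S}_{\frac{r}{s}}(\zeta_5) : \tfrac{r}{s}>0\right\}=\{0,\ c,\ (1+\zeta_5)c,\ (1-\zeta_5^2)c : c=\pm\zeta_5^j,\ j=0,1,\dots,4\}$. (2) For coprime positive integers $r,s$, $\mathcal{S}_{\frac{r}{s}}(\zeta_5)=0$ if and only if $s\in 5\mathbb{Z}$ and $r\equiv 1$ or $4 \pmod 5$.
   Context: Let $q$ be a formal parameter, $R_q=\begin{pmatrix} q & 1\\ 0 & 1\end{pmatrix}$, $S_q=\begin{pmatrix} 0 & -q^{-1}\\ 1 & 0\end{pmatrix}$, and for integers $c_1,\dots,c_k$ put $M_q(c_1,\dots,c_k)=R_q^{c_1}S_qR_q^{c_2}S_q\cdots R_q^{c_k}S_q$. Every irreducible fraction $\frac{r}{s}>1$ ($r,s$ positive coprime integers) has a unique negative (Hirzebruch–Jung) continued fraction expansion $\frac{r}{s}=c_1-\cfrac{1}{c_2-\cfrac{1}{\ddots-\cfrac{1}{c_k}}}$ with all $c_i\ge 2$; for such $\frac rs$ define polynomials $\mathcal{R}_{\frac rs}(q),\mathcal{S}_{\frac rs}(q)$ as the first column of $M_q(c_1,\dots,c_k)$, i.e. $M_q(c_1,\dots,c_k)=\begin{pmatrix}\mathcal{R}_{\frac rs}(q) & *\\ \mathcal{S}_{\frac rs}(q) & *\end{pmatrix}$. For an arbitrary rational number $x=\frac rs$ (in lowest terms, $s>0$), define $\mathcal{S}_x(q):=\mathcal{S}_{x+m}(q)$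 for any integer $m$ with $x+m>1$ (this is independent of $m$); equivalently $\mathcal{S}_x$ is the denominator, normalized to lie in $\mathbb{Z}[q]$ with constant term $1$, of the $q$-deformed rational $[x]_q$ defined by $[x]_q=\mathcal{R}_x/\mathcal{S}_x$ for $x>1$ and $[x+1]_q=q[x]_q+1$. *)

theory Defs
  imports Complex_Main
begin

text \<open>2x2 matrices as quadruples (a,b,c,d) = [[a,b],[c,d]].\<close>
type_synonym mat2 = "complex \<times> complex \<times> complex \<times> complex"

definition mmul :: "mat2 \<Rightarrow> mat2 \<Rightarrow> mat2" where
  "mmul A B = (case A of (a,b,c,d) \<Rightarrow> case B of (e,f,g,h) \<Rightarrow>
      (a*e + b*g, a*f + b*h, c*e + d*g, c*f + d*h))"

definition mid :: mat2 where "mid = (1,0,0,1)"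

fun mpow :: "mat2 \<Rightarrow> nat \<Rightarrow> mat2" where
  "mpow A 0 = mid"
| "mpow A (Suc n) = mmul A (mpow A n)"

definition Rq :: "complex \<Rightarrow> mat2" where "Rq q = (q, 1, 0, 1)"
definition Sq :: "complex \<Rightarrow> mat2" where "Sq q = (0, - inverse q, 1, 0)"

fun Mq :: "complex \<Rightarrow> int list \<Rightarrow> mat2" where
  "Mq q [] = mid"
| "Mq q (c # cs) = mmul (mmul (mpow (Rq q) (nat c)) (Sq q)) (Mq q cs)"

fun hj_val :: "int list \<Rightarrow> rat" where
  "hj_val [] = 0"
| "hj_val [c] = of_int c"
| "hj_val (c # cs) = of_int c - 1 / hj_val cs"

definition hj_expansion :: "rat \<Rightarrow> int list" where
  "hj_expansion x = (THE cs. cs \<noteq> [] \<and> (\<forall>c\<in>set cs. c \<ge> 2) \<and> hj_val cs = x)"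

text \<open>S_x(q) for x > 1: lower-left entry (first column, second row) of M_q.\<close>
definition S_gt1 :: "complex \<Rightarrow> rat \<Rightarrow> complex" where
  "S_gt1 q x = fst (snd (snd (Mq q (hj_expansion x))))"

text \<open>S_x(q) for arbitrary rational x: S_{x+m} with x+m > 1; we take m = 2 - floor x.\<close>
definition S_rat :: "complex \<Rightarrow> rat \<Rightarrow> complex" where
  "S_rat q x = S_gt1 q (x + of_int (2 - \<lfloor>x\<rfloor>))"

end

theory Submission
  imports Defs
begin
datatype zr = Z int int int int int

fun zev :: "complex \<Rightarrow> zr \<Rightarrow> complex" where
  "zev z (Z a b c d e) = of_int a + of_int b * z + of_int c * z^2 + of_int d * z^3 + of_int e * z^4"

fun zadd :: "zr \<Rightarrow> zr \<Rightarrow> zr" where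
  "zadd (Z a b c d e) (Z a' b' c' d' e') = Z (a+a') (b+b') (c+c') (d+d') (e+e')"

fun zsm :: "int \<Rightarrow> zr \<Rightarrow> zr" where
  "zsm s (Z a b c d e) = Z (s*a) (s*b) (s*c) (s*d) (s*e)"

fun zrot :: "zr \<Rightarrow> zr" where
  "zrot (Z a b c d e) = Z e a b c d"

fun zeq :: "zr \<Rightarrow> zr \<Rightarrow> bool" where
  "zeq (Z a b c d e) (Z a' b' c' d' e') =
     (a - a' = b - b' \<and> b - b' = c - c' \<and> c - c' = d - d' \<and> d - d' = e - e')"

definition zrotn :: "nat \<Rightarrow> zr \<Rightarrow> zr" where "zrotn n = zrot ^^ n"

fun zgeo :: "nat \<Rightarrow> zr \<Rightarrow> zr" where
  "zgeo 0 p = Z 0 0 0 0 0"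
| "zgeo (Suc k) p = zadd (zgeo k p) (zrotn k p)"

definition zG :: "nat \<Rightarrow> zr \<times> zr \<Rightarrow> zr \<times> zr" where
  "zG k f = (zadd (zgeo k (fst f)) (zsm (-1) (zrotn ((k+4) mod 5) (snd f))), fst f)"
definition Flist :: "(zr \<times> zr) list" where
 "Flist = [(Z (0) (0) (0) (0) (0), Z (0) (0) (0) (0) (0)),
  (Z (0) (0) (0) (0) (0), Z (1) (0) (0) (0) (0)),
  (Z (1) (2) (1) (1) (0), Z (1) (1) (0) (0) (0)),
  (Z (1) (1) (2) (1) (0), Z (1) (1) (1) (0) (0)),
  (Z (3) (3) (3) (3) (3), Z (1) (1) (1) (1) (0)),
  (Z (1) (0) (0) (0) (0), Z (0) (0) (0) (0) (0)),
  (Z (1) (0) (0) (0) (0), Z (1) (0) (0) (0) (0)),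
  (Z (0) (1) (0) (0) (0), Z (1) (1) (0) (0) (0)),
  (Z (2) (2) (3) (2) (2), Z (1) (1) (1) (0) (0)),
  (Z (2) (2) (2) (3) (2), Z (1) (1) (1) (1) (0)),
  (Z (-1) (-1) (0) (0) (-1), Z (1) (1) (2) (1) (0)),
  (Z (1) (1) (0) (0) (0), Z (1) (0) (0) (0) (0)),
  (Z (1) (2) (2) (1) (1), Z (1) (1) (0) (0) (0)),
  (Z (0) (1) (1) (0) (0), Z (1) (1) (1) (0) (0)),
  (Z (1) (1) (2) (2) (1), Z (1) (1) (1) (1) (0)),
  (Z (-1) (0) (0) (0) (-1), Z (1) (2) (1) (1) (0)),
  (Z (1) (1) (1) (0) (0), Z (1) (0) (0) (0) (0)),
  (Z (1) (1) (1) (0) (0), Z (1) (1) (0) (0) (0)),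
  (Z (1) (2) (2) (2) (1), Z (1) (1) (1) (0) (0)),
  (Z (0) (1) (1) (1) (0), Z (1) (1) (1) (1) (0)),
  (Z (0) (0) (0) (0) (-1), Z (0) (0) (0) (0) (0)),
  (Z (1) (1) (1) (1) (0), Z (1) (0) (0) (0) (0)),
  (Z (0) (0) (0) (0) (-1), Z (1) (1) (0) (0) (0)),
  (Z (0) (0) (0) (0) (-1), Z (1) (1) (1) (0) (0)),
  (Z (0) (0) (0) (0) (-1), Z (1) (1) (1) (1) (0))]"

definition UIlist :: "(int \<times> nat) list" where
 "UIlist = [(1, 0), (1, 0), (1, 0), (1, 0), (1, 3), (1, 0), (1, 0), (1, 1), (1, 2), (1, 3), (1, 2), (1, 0), (1, 1), (1, 1), (1, 2), (1, 1), (1, 0), (1, 0), (1, 1), (1, 1), (1, 0), (1, 0), (1, 0), (1, 0), (1, 0), (1, 0), (1, 1), (1, 0), (1, 0), (1, 4), (1, 0), (1, 0), (1, 1), (1, 2), (1, 3), (1, 2), (1, 0), (1, 1), (1, 1), (1, 2), (1, 1), (1, 0), (1, 0), (1, 1), (1, 1), (1, 0), (1, 0), (1, 0), (1, 0), (1, 0), (1, 0), (1, 2), (1, 0), (1, 0), (1, 0), (1, 0), (1, 0), (1, 1), (1, 2), (1, 3), (1, 2), (1, 0), (1, 1), (1, 1), (1, 2), (1, 1), (1, 0), (1, 0), (1, 1), (1, 1), (1, 0), (1, 0), (1, 0), (1, 0), (1, 0), (1, 0), (1, 3), (1, 0), (1, 0), (1, 1), (1, 0), (1, 0), (1, 1),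 (1, 2), (1, 3), (1, 2), (1, 0), (1, 1), (1, 1), (1, 2), (1, 1), (1, 0), (1, 0), (1, 1), (1, 1), (1, 0), (1, 0), (1, 0), (1, 0), (1, 0), (1, 0), (1, 4), (1, 0), (1, 0), (1, 2), (1, 0), (1, 0), (1, 1), (1, 2), (1, 3), (1, 2), (1, 0), (1, 1), (1, 1), (1, 2), (1, 1), (1, 0), (1, 0), (1, 1), (1, 1), (1, 0), (1, 0), (1, 0), (1, 0), (1, 0)]"

definition TIlist :: "(int \<times> nat \<times> nat) option list" where
 "TIlist = [None, Some (1, 0, 0), Some (1, 0, 1), Some (-1, 3, 1), Some (-1, 4, 0), None, Some (1, 0, 0), Some (1, 0, 1), Some (-1, 3, 1), Some (-1, 4, 0), Some (1, 2, 2), Some (1, 0, 0), Some (1, 0, 1), Some (-1, 3, 1), Some (-1, 4, 0), Some (-1, 4, 2), Some (1, 0, 0), Some (1, 0, 1), Some (-1, 3, 1), Some (-1, 4, 0), None, Some (1, 0, 0), Some (1, 0, 1), Some (-1, 3, 1), Some (-1, 4, 0)]"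

definition Ftab :: "nat \<Rightarrow> nat \<Rightarrow> zr \<times> zr" where "Ftab a b = Flist ! (5*a+b)"
definition UI :: "nat \<Rightarrow> nat \<Rightarrow> nat \<Rightarrow> int \<times> nat" where "UI k a b = UIlist ! (25*k+5*a+b)"
definition TI :: "nat \<Rightarrow> nat \<Rightarrow> (int \<times> nat \<times> nat) option" where "TI a b = TIlist ! (5*a+b)"

definition chk1 :: "nat \<Rightarrow> nat \<Rightarrow> nat \<Rightarrow> bool" where
  "chk1 k a b = (case UI k a b of (s,j) \<Rightarrow> s \<in> {1,-1} \<and> j < 5 \<and>
     zeq (fst (zG k (Ftab a b))) (zsm s (zrotn j (fst (Ftab ((k*a+4*b) mod 5) a)))) \<and>
     zeq (snd (zG k (Ftab a b))) (zsm s (zrotn j (snd (Ftab ((k*a+4*b) mod 5) a)))))"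

definition Tt :: "nat \<Rightarrow> zr" where
  "Tt t = (if t = 0 then Z 1 0 0 0 0 else if t = 1 then Z 1 1 0 0 0 else Z 1 0 (-1) 0 0)"

definition chk2 :: "nat \<Rightarrow> nat \<Rightarrow> bool" where
  "chk2 a b = ((a,b) = (0,0) \<or> (case TI a b of
      None \<Rightarrow> zeq (snd (Ftab a b)) (Z 0 0 0 0 0) \<and> b = 0 \<and> (a = 1 \<or> a = 4)
    | Some (s,j,t) \<Rightarrow> zeq (snd (Ftab a b)) (zsm s (zrotn j (Tt t))) \<and> t < 3 \<and> s \<in> {1,-1} \<and> j < 5
         \<and> \<not> (b = 0 \<and> (a = 1 \<or> a = 4))))"

lemma chk1_all: "list_all (\<lambda>k. list_all (\<lambda>a. list_all (\<lambda>b. chk1 k a b) [0..<5]) [0..<5]) [0..<5]"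
  by code_simp

lemma chk2_all: "list_all (\<lambda>a. list_all (\<lambda>b. chk2 a b) [0..<5]) [0..<5]"
  by code_simp

lemma zsum0: assumes "z^5 = (1::complex)" "z \<noteq> 1" shows "1 + z + z^2 + z^3 + z^4 = 0"
proof -
  have "(1 - z) * (1 + z + z^2 + z^3 + z^4) = 1 - z^5" by (simp add: algebra_simps power_numeral_reduce)
  then have "(1 - z) * (1 + z + z^2 + z^3 + z^4) = 0" using assms by simp
  then show ?thesis using assms by simp
qed

lemma zev_add: "zev z (zadd p q) = zev z p + zev z q"
  by (cases p; cases q) (simp add: algebra_simps)

lemma zev_sm: "zev z (zsm s p) = of_int s * zev z p"
  by (cases p) (simp add: algebra_simps)

lemma zev_rot: assumes "z^5 = 1" shows "zev z (zrot p) = z * zev z p"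
proof (cases p)
  case (Z a b c d e)
  have "z * z^4 = 1" using assms by (simp add: power_numeral_reduce)
  then show ?thesis using Z by (simp add: algebra_simps power_numeral_reduce)
qed

lemma zev_rotn: assumes "z^5 = 1" shows "zev z (zrotn n p) = z^n * zev z p"
  by (induction n) (simp_all add: zrotn_def zev_rot[OF assms])

lemma zev_geo: assumes "z^5 = 1" shows "zev z (zgeo k p) = (\<Sum>i<k. z^i) * zev z p"
  by (induction k) (simp_all add: zev_add zev_rotn[OF assms] algebra_simps)

lemma zeq_ev: assumes "z^5 = (1::complex)" "z \<noteq> 1" "zeq p q" shows "zev z p = zev z q"
proof (cases p; cases q)
  fix a b c d e a' b' c' d' e'
  assume p: "p = Z a b c d e" and q: "q = Z a' b' c' d' e'"
  define t where "t = a - a'"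
  have e: "a = a' + t" "b = b' + t" "c = c' + t" "d = d' + t" "e = e' + t" using assms(3) p q t_def by auto
  have "zev z p - zev z q = of_int t * (1 + z + z^2 + z^3 + z^4)"
    unfolding p q e by (simp add: algebra_simps)
  also have "\<dots> = 0" using zsum0[OF assms(1,2)] by simp
  finally show ?thesis by simp
qed

definition col1 :: "mat2 \<Rightarrow> complex \<times> complex" where "col1 M = (fst M, fst (snd (snd M)))"

definition UU :: "complex \<Rightarrow> complex set" where
  "UU z = {\<sigma> * z ^ j | \<sigma> j. \<sigma> \<in> {1, -1} \<and> j < (5::nat)}"

fun W :: "int list \<Rightarrow> int \<times> int" where
  "W [] = (1, 0)"
| "W (c # cs) = (case W cs of (r, s) \<Rightarrow> (c * r - s, r))"

lemma mpow_R: "mpow (Rq q) n = (q^n, \<Sum>i<n. q^i, 0, 1)"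
proof (induction n)
  case 0 then show ?case by (simp add: mid_def)
next
  case (Suc n)
  have "(\<Sum>i<Suc n. q^i) = 1 + q * (\<Sum>i<n. q^i)"
    by (subst sum.lessThan_Suc_shift) (simp add: sum_distrib_left)
  then show ?case using Suc by (simp add: mmul_def Rq_def)
qed

lemma col1_cons: "col1 (Mq q (c # cs)) =
   ((\<Sum>i<nat c. q^i) * fst (col1 (Mq q cs)) - q^(nat c) * inverse q * snd (col1 (Mq q cs)),
    fst (col1 (Mq q cs)))"
proof -
  obtain A B C D where M: "Mq q cs = (A, B, C, D)" by (cases "Mq q cs") auto
  show ?thesis by (simp add: M mpow_R col1_def mmul_def Sq_def)
qed

lemma zpow_mod: assumes "z^5 = (1::complex)" shows "z^n = z^(n mod 5)"
proof -
  have "z^n = z^(5*(n div 5) + n mod 5)" by simp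
  also have "\<dots> = (z^5)^(n div 5) * z^(n mod 5)" by (simp only: power_add power_mult)
  finally show ?thesis using assms by simp
qed

lemma zgeo_mod: assumes "z^5 = (1::complex)" "z \<noteq> 1" shows "(\<Sum>i<n. z^i) = (\<Sum>i<n mod 5. z^i)"
proof -
  have h: "z^n = z^(n mod 5)" by (rule zpow_mod[OF assms(1)])
  have "(\<Sum>i<n. z^i) = (1 - z^n) / (1 - z)" using assms(2) by (simp add: sum_gp_strict)
  also have "\<dots> = (1 - z^(n mod 5)) / (1 - z)" by (simp only: h)
  also have "\<dots> = (\<Sum>i<n mod 5. z^i)" using assms(2) by (simp add: sum_gp_strict)
  finally show ?thesis .
qed

lemma zinv: assumes "z^5 = (1::complex)" shows "inverse z = z^4"
proof -
  have "z^5 = z * z^4" by (simp add: eval_nat_numeral)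
  then have "z * z^4 = 1" using assms by simp
  then show ?thesis by (rule inverse_unique)
qed

lemma UU_mult: assumes "z^5 = (1::complex)" "u \<in> UU z" "\<sigma> \<in> {1,-1}" "j < 5"
  shows "u * (of_int \<sigma> * z^j) \<in> UU z"
proof -
  obtain \<sigma>' i where u: "u = \<sigma>' * z^i" "\<sigma>' \<in> {1,-1}" "i < (5::nat)" using assms(2) unfolding UU_def by blast
  have "u * (of_int \<sigma> * z^j) = (\<sigma>' * of_int \<sigma>) * z^(i+j)"
    unfolding u(1) power_add by (simp only: mult_ac)
  also have "z^(i+j) = z^((i+j) mod 5)" by (rule zpow_mod[OF assms(1)])
  finally have eq: "u * (of_int \<sigma> * z^j) = (\<sigma>' * of_int \<sigma>) * z^((i+j) mod 5)" .
  have mem: "\<sigma>' * of_int \<sigma> \<in> {1,-1}" using u(2) assms(3) by auto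
  have lt: "(i+j) mod 5 < (5::nat)" by simp
  show ?thesis unfolding UU_def
    by (rule CollectI, rule exI[of _ "\<sigma>' * of_int \<sigma>"], rule exI[of _ "(i+j) mod 5"]) (use eq mem lt in blast)
qed

lemma chk1_fact: "k < 5 \<Longrightarrow> a < 5 \<Longrightarrow> b < 5 \<Longrightarrow> chk1 k a b"
  using chk1_all by (simp add: list_all_iff)

lemma chk2_fact: "a < 5 \<Longrightarrow> b < 5 \<Longrightarrow> chk2 a b"
  using chk2_all by (simp add: list_all_iff)

definition FF :: "complex \<Rightarrow> int \<times> int \<Rightarrow> complex \<times> complex" where
  "FF z rs = (zev z (fst (Ftab (nat (fst rs mod 5)) (nat (snd rs mod 5)))),
              zev z (snd (Ftab (nat (fst rs mod 5)) (nat (snd rs mod 5)))))"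

lemma mod_step: "nat ((c*r - s) mod 5) = (nat (c mod 5) * nat (r mod 5) + 4 * nat (s mod 5)) mod 5"
proof -
  have "(c*r - s) mod 5 = ((c mod 5)*(r mod 5) + 4*(s mod 5)) mod 5"
  proof -
    have "(c*r + 4*s) mod 5 = ((c*r - s) + s*5) mod 5" by (simp add: algebra_simps)
    then have "(c*r - s) mod 5 = (c*r + 4*s) mod 5" using mod_mult_self1[of "c*r - s" s 5] by simp
    also have "\<dots> = ((c mod 5)*(r mod 5) + 4*(s mod 5)) mod 5"
    proof -
      have 1: "(c*r) mod 5 = ((c mod 5)*(r mod 5)) mod 5" by (rule mod_mult_eq[symmetric])
      have 2: "(4*s) mod 5 = (4*(s mod 5)) mod 5" by (rule mod_mult_right_eq[symmetric])
      show ?thesis by (metis 1 2 mod_add_eq)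
    qed
    finally show ?thesis .
  qed
  moreover have "int ((nat (c mod 5) * nat (r mod 5) + 4 * nat (s mod 5)) mod 5) = ((c mod 5)*(r mod 5) + 4*(s mod 5)) mod 5"
    by (simp add: of_nat_mod)
  ultimately have "nat ((c*r - s) mod 5) = nat (int ((nat (c mod 5) * nat (r mod 5) + 4 * nat (s mod 5)) mod 5))"
    by simp
  then show ?thesis by (simp only: nat_int)
qed

lemma invariant:
  assumes z5: "z^5 = (1::complex)" and z1: "z \<noteq> 1" and cs: "\<forall>c\<in>set cs. c \<ge> 0"
  shows "\<exists>u\<in>UU z. col1 (Mq z cs) = (u * fst (FF z (W cs)), u * snd (FF z (W cs)))"
  using cs
proof (induction cs)
  case Nil
  have "(1::complex) \<in> UU z" unfolding UU_def by (rule CollectI, rule exI[of _ 1], rule exI[of _ 0]) simp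
  moreover have "col1 (Mq z []) = (1 * fst (FF z (W [])), 1 * snd (FF z (W [])))"
    by (simp add: col1_def mid_def FF_def Ftab_def Flist_def)
  ultimately show ?case by blast
next
  case (Cons c cs)
  then obtain u where u: "u \<in> UU z" "col1 (Mq z cs) = (u * fst (FF z (W cs)), u * snd (FF z (W cs)))" by auto
  obtain r s where W: "W cs = (r, s)" by (cases "W cs") auto
  define a where "a = nat (r mod 5)"
  define b where "b = nat (s mod 5)"
  define k where "k = nat (c mod 5)"
  have c0: "c \<ge> 0" using Cons by simp
  have ab: "a < 5" "b < 5" "k < 5" unfolding a_def b_def k_def by (simp_all add: nat_less_iff)
  obtain \<sigma> j where UIe: "UI k a b = (\<sigma>, j)" by (cases "UI k a b") auto
  have \<sigma>j: "\<sigma> \<in> {1,-1}" "j < 5" using chk1_fact[OF ab(3,1,2)] UIe unfolding chk1_def by auto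
  define f where "f = Ftab a b"
  define h where "h = Ftab ((k*a+4*b) mod 5) a"
  have ch: "zeq (fst (zG k f)) (zsm \<sigma> (zrotn j (fst h)))" "zeq (snd (zG k f)) (zsm \<sigma> (zrotn j (snd h)))"
    using chk1_fact[OF ab(3,1,2)] UIe unfolding chk1_def f_def h_def by auto
  have e1: "(\<Sum>i<k. z^i) * zev z (fst f) - z^((k+4) mod 5) * zev z (snd f) = of_int \<sigma> * z^j * zev z (fst h)"
    using zeq_ev[OF z5 z1 ch(1)] unfolding zG_def by (simp add: zev_add zev_sm zev_geo[OF z5] zev_rotn[OF z5])
  have e2: "zev z (fst f) = of_int \<sigma> * z^j * zev z (snd h)"
    using zeq_ev[OF z5 z1 ch(2)] unfolding zG_def by (simp add: zev_sm zev_rotn[OF z5])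
  have kc: "nat c mod 5 = k" unfolding k_def using c0 by (simp add: nat_mod_distrib)
  have g: "(\<Sum>i<nat c. z^i) = (\<Sum>i<k. z^i)" using zgeo_mod[OF z5 z1, of "nat c"] kc by simp
  have p: "z^(nat c) * inverse z = z^((k+4) mod 5)"
  proof -
    have "z^(nat c) * inverse z = z^(nat c + 4)" using zinv[OF z5] by (simp add: power_add)
    also have "\<dots> = z^((nat c + 4) mod 5)" by (rule zpow_mod[OF z5])
    also have "(nat c + 4) mod 5 = (k+4) mod 5" using kc by (metis mod_add_left_eq)
    finally show ?thesis by simp
  qed
  have Wc: "W (c # cs) = (c*r - s, r)" using W by simp
  have FFcs: "FF z (W cs) = (zev z (fst f), zev z (snd f))" unfolding FF_def W f_def a_def b_def by simp
  have ms: "nat ((c*r - s) mod 5) = (k*a+4*b) mod 5" unfolding k_def a_def b_def by (rule mod_step)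
  have FFc: "FF z (W (c # cs)) = (zev z (fst h), zev z (snd h))"
    unfolding FF_def Wc fst_conv snd_conv ms a_def[symmetric] h_def ..
  have eq: "col1 (Mq z (c # cs)) = ((u * (of_int \<sigma> * z^j)) * fst (FF z (W (c # cs))), (u * (of_int \<sigma> * z^j)) * snd (FF z (W (c # cs))))"
  proof -
    have "col1 (Mq z (c # cs)) = ((\<Sum>i<k. z^i) * (u * zev z (fst f)) - z^((k+4) mod 5) * (u * zev z (snd f)), u * zev z (fst f))"
      unfolding col1_cons g p[symmetric] using u(2) FFcs by (simp add: mult.assoc)
    also have "\<dots> = (u * ((\<Sum>i<k. z^i) * zev z (fst f) - z^((k+4) mod 5) * zev z (snd f)), u * zev z (fst f))"
      by (simp add: algebra_simps)
    also have "\<dots> = ((u * (of_int \<sigma> * z^j)) * zev z (fst h), (u * (of_int \<sigma> * z^j)) * zev z (snd h))"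
      by (subst e1, subst e2) (simp add: mult.assoc)
    finally show ?thesis unfolding FFc by simp
  qed
  have mem: "u * (of_int \<sigma> * z^j) \<in> UU z" using UU_mult[OF z5 u(1) \<sigma>j] .
  show ?case
    apply (rule bexI[where x = "u * (of_int \<sigma> * z^j)"])
     apply (rule eq)
    apply (rule mem)
    done
qed

lemma hj_val_cons: "cs \<noteq> [] \<Longrightarrow> hj_val (c # cs) = of_int c - 1 / hj_val cs"
  by (cases cs) auto

lemma hj_gt1: "cs \<noteq> [] \<Longrightarrow> \<forall>c\<in>set cs. c \<ge> 2 \<Longrightarrow> hj_val cs > 1"
proof (induction cs)
  case Nil then show ?case by simp
next
  case (Cons c cs)
  show ?case
  proof (cases "cs = []")
    case True then show ?thesis using Cons by simp
  next
    case False
    then have v: "hj_val cs > 1" using Cons by simp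
    have "1 / hj_val cs < 1" using v by simp
    moreover have "(2::rat) \<le> of_int c" using Cons by simp
    ultimately show ?thesis using False by (simp add: hj_val_cons)
  qed
qed

lemma hj_cons_bounds: assumes "cs \<noteq> []" "\<forall>c\<in>set cs. c \<ge> 2"
  shows "of_int c - 1 < hj_val (c # cs) \<and> hj_val (c # cs) < of_int c"
proof -
  have v: "hj_val cs > 1" using hj_gt1 assms by blast
  have "1 / hj_val cs < 1" "0 < 1 / hj_val cs" using v by simp_all
  then show ?thesis using assms by (simp add: hj_val_cons)
qed

lemma int_between: "of_int c - 1 < (x::rat) \<Longrightarrow> x < of_int c \<Longrightarrow> of_int d - 1 < x \<Longrightarrow> x < of_int d \<Longrightarrow> c = d"
proof -
  assume a: "of_int c - 1 < x" "x < of_int c" "of_int d - 1 < x" "x < of_int d"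
  then have "of_int c < (of_int (d + 1) :: rat)" "of_int d < (of_int (c + 1) :: rat)" by simp_all
  then have "c < d + 1" "d < c + 1" by (simp_all only: of_int_less_iff)
  then show "c = d" by simp
qed

lemma hj_unique:
  "cs \<noteq> [] \<Longrightarrow> \<forall>c\<in>set cs. c \<ge> 2 \<Longrightarrow> ds \<noteq> [] \<Longrightarrow> \<forall>c\<in>set ds. c \<ge> 2 \<Longrightarrow> hj_val cs = hj_val ds \<Longrightarrow> cs = ds"
proof (induction cs arbitrary: ds)
  case Nil then show ?case by simp
next
  case (Cons c cs')
  obtain d ds' where ds: "ds = d # ds'" using Cons(4) by (cases ds) auto
  show ?case
  proof (cases "cs' = []")
    case True
    show ?thesis
    proof (cases "ds' = []")
      case True2: True
      then show ?thesis using Cons.prems ds True by simp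
    next
      case False
      have b: "of_int d - 1 < hj_val ds \<and> hj_val ds < of_int d" unfolding ds
        by (rule hj_cons_bounds) (use False Cons.prems ds in auto)
      have "hj_val ds = of_int c" using Cons.prems True by simp
      then have "of_int d - 1 < (of_int c :: rat)" "(of_int c :: rat) < of_int d" using b by auto
      then have "d - 1 < c" "c < d" by (simp_all add: of_int_less_iff[symmetric] del: of_int_less_iff)
      then show ?thesis by simp
    qed
  next
    case False
    have bc: "of_int c - 1 < hj_val (c # cs') \<and> hj_val (c # cs') < of_int c"
      by (rule hj_cons_bounds) (use False Cons.prems in auto)
    show ?thesis
    proof (cases "ds' = []")
      case True
      have "hj_val (c # cs') = of_int d" using Cons.prems True ds by simp
      then have "of_int c - 1 < (of_int d :: rat)" "(of_int d :: rat) < of_int c" using bc by auto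
      then have "c - 1 < d" "d < c" by (simp_all add: of_int_less_iff[symmetric] del: of_int_less_iff)
      then show ?thesis by simp
    next
      case False2: False
      have bd: "of_int d - 1 < hj_val ds \<and> hj_val ds < of_int d" unfolding ds
        by (rule hj_cons_bounds) (use False2 Cons.prems ds in auto)
      have cd: "c = d" using int_between[of c "hj_val ds" d] bc bd Cons.prems(5) by auto
      have "1 / hj_val cs' = 1 / hj_val ds'"
        using Cons.prems(5) unfolding ds cd using hj_val_cons[OF False] hj_val_cons[OF False2] by simp
      then have "hj_val cs' = hj_val ds'" by simp
      then have "cs' = ds'" using Cons.IH[of ds'] False False2 Cons.prems ds by auto
      then show ?thesis using cd ds by simp
    qed
  qed
qed

lemma hj_expansion_eq: assumes "cs \<noteq> []" "\<forall>c\<in>set cs. c \<ge> 2" shows "hj_expansion (hj_val cs) = cs"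
  unfolding hj_expansion_def
  by (rule the_equality) (use assms hj_unique in auto)

lemma hj_exists:
  fixes s :: int
  shows "0 < s \<Longrightarrow> s < r \<Longrightarrow> coprime r s \<Longrightarrow>
    \<exists>cs. cs \<noteq> [] \<and> (\<forall>c\<in>set cs. c \<ge> 2) \<and> hj_val cs = of_int r / of_int s \<and> W cs = (r, s)"
proof (induction "nat s" arbitrary: s r rule: less_induct)
  case less
  show ?case
  proof (cases "s = 1")
    case True
    then show ?thesis using less.prems by (intro exI[of _ "[r]"]) auto
  next
    case False
    define c where "c = r div s + 1"
    define s' where "s' = c * s - r"
    have rs: "r = s * (r div s) + r mod s" by simp
    have m0: "r mod s \<noteq> 0"
    proof
      assume "r mod s = 0"
      then have "s dvd r" by auto
      then have "is_unit s" using coprime_common_divisor[OF less.prems(3) _ dvd_refl] by blast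
      then show False using False less.prems(1) by auto
    qed
    have mpos: "0 < r mod s" "r mod s < s" using m0 less.prems(1) by (simp_all add: order_le_neq_trans)
    have s'eq: "s' = s - r mod s" unfolding s'_def c_def using rs by (simp add: algebra_simps)
    have s'b: "0 < s'" "s' < s" using s'eq mpos by auto
    have c2: "c \<ge> 2"
    proof -
      have "r div s \<ge> 1" using zdiv_mono1[of s r s] less.prems(1,2) by simp
      then show ?thesis unfolding c_def by simp
    qed
    have cop: "coprime s s'"
    proof -
      have h: "s' = -r + s*c" unfolding s'_def by simp
      have "s' mod s = (- r) mod s" unfolding h by (rule mod_mult_self2)
      then have "coprime s' s = coprime (-r) s" using coprime_mod_left_iff[of s s'] coprime_mod_left_iff[of s "-r"] less.prems(1) by simp
      then have "coprime s' s" using less.prems(3) by simp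
      then show ?thesis by (simp add: coprime_commute)
    qed
    have "nat s' < nat s" using s'b by simp
    then have "\<exists>cs. cs \<noteq> [] \<and> (\<forall>c\<in>set cs. c \<ge> 2) \<and> hj_val cs = of_int s / of_int s' \<and> W cs = (s, s')"
      using s'b cop by (rule less.hyps)
    then obtain cs where cs: "cs \<noteq> []" "\<forall>c\<in>set cs. c \<ge> 2" "hj_val cs = of_int s / of_int s'" "W cs = (s, s')"
      by blast
    have "hj_val (c # cs) = of_int c - of_int s' / of_int s" using cs hj_val_cons[OF cs(1)] by simp
    also have "\<dots> = of_int r / of_int s" unfolding s'_def using less.prems(1) by (simp add: field_simps)
    finally have "hj_val (c # cs) = of_int r / of_int s" .
    moreover have "W (c # cs) = (r, s)" using cs(4) unfolding s'_def by simp
    ultimately show ?thesis using cs c2 by (intro exI[of _ "c # cs"]) auto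
  qed
qed

lemma S_gt1_inv:
  assumes z5: "z^5 = (1::complex)" and z1: "z \<noteq> 1" and "0 < s" "s < r" "coprime r s"
  shows "\<exists>u\<in>UU z. S_gt1 z (of_int r / of_int s) = u * snd (FF z (r, s))"
proof -
  obtain cs where cs: "cs \<noteq> []" "\<forall>c\<in>set cs. c \<ge> 2" "hj_val cs = of_int r / of_int s" "W cs = (r, s)"
    using hj_exists[OF assms(3,4,5)] by blast
  have he: "hj_expansion (of_int r / of_int s) = cs" using hj_expansion_eq[OF cs(1,2)] cs(3) by simp
  have "\<forall>c\<in>set cs. c \<ge> 0" using cs(2) by force
  then obtain u where u: "u \<in> UU z" "col1 (Mq z cs) = (u * fst (FF z (W cs)), u * snd (FF z (W cs)))"
    using invariant[OF z5 z1] by blast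
  have "S_gt1 z (of_int r / of_int s) = snd (col1 (Mq z cs))" unfolding S_gt1_def he col1_def by simp
  also have "\<dots> = u * snd (FF z (r, s))" using u(2) cs(4) by simp
  finally show ?thesis using u(1) by blast
qed

lemma S_rat_inv:
  assumes z5: "z^5 = (1::complex)" and z1: "z \<noteq> 1" and r: "0 < r" and s: "0 < s" and cop: "coprime r s"
  shows "\<exists>u\<in>UU z. S_rat z (of_int r / of_int s) = u * snd (FF z (r mod s + 2*s, s))"
proof -
  define R where "R = r mod s + 2*s"
  have fl: "\<lfloor>(of_int r / of_int s :: rat)\<rfloor> = r div s" by (rule floor_divide_of_int_eq)
  have Ri: "R = r + (2 - r div s) * s" unfolding R_def using minus_div_mult_eq_mod[of r s] by (simp add: algebra_simps)
  have "(of_int r / of_int s :: rat) + of_int (2 - \<lfloor>(of_int r / of_int s :: rat)\<rfloor>) = of_int R / of_int s"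
    unfolding fl Ri using s by (simp add: field_simps)
  then have eq: "S_rat z (of_int r / of_int s) = S_gt1 z (of_int R / of_int s)" unfolding S_rat_def by simp
  have "0 \<le> r mod s" using s by simp
  then have sR: "s < R" unfolding R_def using s by linarith
  have "R mod s = r mod s" unfolding R_def by simp
  then have "coprime R s" using coprime_mod_left_iff[of s R] coprime_mod_left_iff[of s r] cop s by simp
  then show ?thesis using S_gt1_inv[OF z5 z1 s sR] eq unfolding R_def by simp
qed

lemma Tt_sem: assumes "t < 3" "z \<noteq> -1" "z^2 \<noteq> (1::complex)"
  shows "zev z (Tt t) \<in> {1, 1 + z, 1 - z^2} \<and> zev z (Tt t) \<noteq> 0"
proof -
  have "t = 0 \<or> t = 1 \<or> t = 2" using assms(1) by linarith
  moreover have "1 + z \<noteq> 0" using assms(2) by (metis add.commute add_eq_0_iff)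
  moreover have "1 - z^2 \<noteq> 0" using assms(3) by simp
  ultimately show ?thesis by (auto simp: Tt_def)
qed

lemma chk2_sem:
  assumes z5: "z^5 = (1::complex)" and z1: "z \<noteq> 1" and z2: "z^2 \<noteq> 1" and ab: "a < 5" "b < 5" "(a,b) \<noteq> (0,0)"
  shows "(zev z (snd (Ftab a b)) = 0 \<longleftrightarrow> b = 0 \<and> (a = 1 \<or> a = 4)) \<and>
         zev z (snd (Ftab a b)) \<in> {0} \<union> {c * t | c t. c \<in> UU z \<and> t \<in> {1, 1 + z, 1 - z^2}}"
proof (cases "TI a b")
  case None
  have c: "chk2 a b" by (rule chk2_fact[OF ab(1,2)])
  then have h: "zeq (snd (Ftab a b)) (Z 0 0 0 0 0)" "b = 0 \<and> (a = 1 \<or> a = 4)"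
    using ab(3) None unfolding chk2_def by auto
  have "zev z (snd (Ftab a b)) = zev z (Z 0 0 0 0 0)" by (rule zeq_ev[OF z5 z1 h(1)])
  then have "zev z (snd (Ftab a b)) = 0" by simp
  then show ?thesis using h(2) by simp
next
  case (Some v)
  obtain \<sigma> j t where v: "v = (\<sigma>, j, t)" by (cases v) auto
  have c: "chk2 a b" by (rule chk2_fact[OF ab(1,2)])
  then have h: "zeq (snd (Ftab a b)) (zsm \<sigma> (zrotn j (Tt t)))" "t < 3" "\<sigma> \<in> {1,-1}" "j < 5"
      "\<not> (b = 0 \<and> (a = 1 \<or> a = 4))"
    using ab(3) Some v unfolding chk2_def by auto
  have E: "zev z (snd (Ftab a b)) = (of_int \<sigma> * z^j) * zev z (Tt t)"
    using zeq_ev[OF z5 z1 h(1)] by (simp add: zev_sm zev_rotn[OF z5])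
  have zm1: "z \<noteq> -1" using z2 by auto
  have Tt: "zev z (Tt t) \<in> {1, 1 + z, 1 - z^2}" "zev z (Tt t) \<noteq> 0"
    using Tt_sem[OF h(2) zm1 z2] by simp_all
  have z0: "z \<noteq> 0" using z5 by auto
  have cU: "of_int \<sigma> * z^j \<in> UU z" unfolding UU_def using h(3,4) by force
  have "of_int \<sigma> * z^j \<noteq> 0" using h(3) z0 by auto
  then have ne: "zev z (snd (Ftab a b)) \<noteq> 0" using E Tt(2) by simp
  have mem: "zev z (snd (Ftab a b)) \<in> {c * t | c t. c \<in> UU z \<and> t \<in> {1, 1 + z, 1 - z^2}}"
    by (rule CollectI, rule exI[of _ "of_int \<sigma> * z^j"], rule exI[of _ "zev z (Tt t)"]) (use E Tt(1) cU in simp)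
  show ?thesis using ne h(5) mem by simp
qed

fun rep :: "nat \<Rightarrow> int list \<Rightarrow> int list" where
  "rep 0 cs = cs"
| "rep (Suc n) cs = 2 # 5 # rep n cs"

lemma L_25: assumes z5: "z^5 = (1::complex)" and z1: "z \<noteq> 1"
  shows "snd (col1 (Mq z (c # 5 # cs))) = - inverse z * snd (col1 (Mq z cs))"
proof -
  have s5: "(\<Sum>i<5. z^i) = 0" using zgeo_mod[OF z5 z1, of 5] by simp
  have "snd (col1 (Mq z (c # 5 # cs))) = fst (col1 (Mq z (5 # cs)))" by (simp only: col1_cons snd_conv)
  also have "\<dots> = (\<Sum>i<5. z^i) * fst (col1 (Mq z cs)) - z^5 * inverse z * snd (col1 (Mq z cs))"
    by (simp only: col1_cons fst_conv nat_numeral)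
  also have "\<dots> = - inverse z * snd (col1 (Mq z cs))" using s5 z5 by simp
  finally show ?thesis .
qed

lemma rep_valid: "\<forall>c\<in>set cs. c \<ge> 2 \<Longrightarrow> \<forall>c\<in>set (rep n cs). c \<ge> 2"
  by (induction n) auto

lemma L_rep: assumes z5: "z^5 = (1::complex)" and z1: "z \<noteq> 1"
  shows "snd (col1 (Mq z (rep n cs))) = (- inverse z)^n * snd (col1 (Mq z cs))"
proof (induction n)
  case 0 then show ?case by simp
next
  case (Suc n)
  have "snd (col1 (Mq z (rep (Suc n) cs))) = snd (col1 (Mq z (2 # 5 # rep n cs)))" by (simp only: rep.simps)
  also have "\<dots> = - inverse z * snd (col1 (Mq z (rep n cs)))" by (rule L_25[OF z5 z1])
  finally show ?case using Suc.IH by simp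
qed

lemma S_rat_25: assumes z5: "z^5 = (1::complex)" and z1: "z \<noteq> 1" and cs: "\<forall>c\<in>set cs. c \<ge> 2"
  shows "S_rat z (hj_val (2 # 5 # cs)) = - inverse z * snd (col1 (Mq z cs)) \<and> hj_val (2 # 5 # cs) > 0"
proof -
  define v where "v = hj_val (2 # 5 # cs)"
  have b: "of_int 2 - 1 < v \<and> v < of_int 2" unfolding v_def by (rule hj_cons_bounds) (use cs in auto)
  have fl: "\<lfloor>v\<rfloor> = 1" using b by (simp add: floor_eq_iff)
  have "v + of_int (2 - \<lfloor>v\<rfloor>) = v + 1" using fl by simp
  also have "\<dots> = hj_val (3 # 5 # cs)"
    unfolding v_def using hj_val_cons[of "5 # cs" 2] hj_val_cons[of "5 # cs" 3] by simp
  finally have veq: "v + of_int (2 - \<lfloor>v\<rfloor>) = hj_val (3 # 5 # cs)" .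
  have "S_rat z v = S_gt1 z (v + of_int (2 - \<lfloor>v\<rfloor>))" unfolding S_rat_def by (rule refl)
  then have "S_rat z v = S_gt1 z (hj_val (3 # 5 # cs))" by (simp only: veq)
  also have "\<dots> = snd (col1 (Mq z (3 # 5 # cs)))"
    unfolding S_gt1_def col1_def using hj_expansion_eq[of "3 # 5 # cs"] cs by simp
  also have "\<dots> = - inverse z * snd (col1 (Mq z cs))" by (rule L_25[OF z5 z1])
  finally show ?thesis using b unfolding v_def by simp
qed

lemma unit_pow: assumes z5: "z^5 = (1::complex)" and w: "w \<in> UU z"
  shows "\<exists>n. (- inverse z)^(Suc n) = w"
proof -
  have key: "(- inverse z)^m = (-1)^m * z^((4*m) mod 5)" for m
  proof -
    have "(- inverse z)^m = (-1)^m * (z^4)^m" unfolding zinv[OF z5] by (rule power_minus)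
    also have "(z^4)^m = z^(4*m)" by (rule power_mult[symmetric])
    also have "z^(4*m) = z^((4*m) mod 5)" by (rule zpow_mod[OF z5])
    finally show ?thesis .
  qed
  obtain \<sigma> j where w: "w = \<sigma> * z^j" "\<sigma> \<in> {1,-1}" "j < (5::nat)" using w unfolding UU_def by blast
  have j: "j = 0 \<or> j = 1 \<or> j = 2 \<or> j = 3 \<or> j = 4" using w(3) by linarith
  show ?thesis
  proof (cases "\<sigma> = 1")
    case True
    then show ?thesis using j unfolding w(1)
      apply (elim disjE)
          apply (rule exI[of _ 9], subst key, simp)
         apply (rule exI[of _ 3], subst key, simp)
        apply (rule exI[of _ 7], subst key, simp)
       apply (rule exI[of _ 1], subst key, simp)
      apply (rule exI[of _ 5], subst key, simp)
      done
  next
    case False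
    then have "\<sigma> = -1" using w(2) by simp
    then show ?thesis using j unfolding w(1)
      apply (elim disjE)
          apply (rule exI[of _ 4], subst key, simp)
         apply (rule exI[of _ 8], subst key, simp)
        apply (rule exI[of _ 2], subst key, simp)
       apply (rule exI[of _ 6], subst key, simp)
      apply (rule exI[of _ 0], subst key, simp)
      done
  qed
qed

lemma attain: assumes z5: "z^5 = (1::complex)" and z1: "z \<noteq> 1" and w: "w \<in> UU z" and cs: "\<forall>c\<in>set cs. c \<ge> 2"
  shows "\<exists>x>0. S_rat z x = w * snd (col1 (Mq z cs))"
proof -
  obtain n where n: "(- inverse z)^(Suc n) = w" using unit_pow[OF z5 w] by blast
  have h: "S_rat z (hj_val (2 # 5 # rep n cs)) = - inverse z * snd (col1 (Mq z (rep n cs))) \<and> hj_val (2 # 5 # rep n cs) > 0"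
    by (rule S_rat_25[OF z5 z1 rep_valid[OF cs]])
  have "S_rat z (hj_val (2 # 5 # rep n cs)) = - inverse z * snd (col1 (Mq z (rep n cs)))" using h by (rule conjunct1)
  also have "\<dots> = - inverse z * ((- inverse z)^n * snd (col1 (Mq z cs)))" by (simp only: L_rep[OF z5 z1])
  also have "\<dots> = (- inverse z)^(Suc n) * snd (col1 (Mq z cs))" by (simp only: power_Suc mult.assoc)
  also have "\<dots> = w * snd (col1 (Mq z cs))" by (simp only: n)
  finally have eq: "S_rat z (hj_val (2 # 5 # rep n cs)) = w * snd (col1 (Mq z cs))" .
  have pos: "hj_val (2 # 5 # rep n cs) > 0" using h by (rule conjunct2)
  show ?thesis by (rule exI[of _ "hj_val (2 # 5 # rep n cs)"]) (use eq pos in simp)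
qed

lemma UU_mult2: assumes z5: "z^5 = (1::complex)" and "u \<in> UU z" "v \<in> UU z" shows "u * v \<in> UU z"
proof -
  obtain \<sigma> j where v: "v = \<sigma> * z^j" "\<sigma> \<in> {1,-1}" "j < (5::nat)" using assms(3) unfolding UU_def by blast
  have "\<sigma> = of_int 1 \<or> \<sigma> = of_int (-1)" using v(2) by simp
  then obtain \<tau> :: int where "\<sigma> = of_int \<tau>" "\<tau> \<in> {1,-1}" by blast
  then show ?thesis using UU_mult[OF z5 assms(2), of \<tau> j] v by simp
qed

lemma not_both5: fixes r s :: int assumes "0 < s" "coprime r s"
  shows "\<not> ((r mod s + 2*s) mod 5 = 0 \<and> s mod 5 = 0)"
proof
  assume h: "(r mod s + 2*s) mod 5 = 0 \<and> s mod 5 = 0"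
  then have d1: "5 dvd (r mod s + 2*s)" "5 dvd s" by auto
  have "(5::int) dvd 2*s" using d1(2) by (rule dvd_mult)
  then have "5 dvd (r mod s + 2*s) - 2*s" using d1(1) by (simp only: dvd_diff)
  then have m5: "5 dvd r mod s" by simp
  have "(5::int) dvd s * (r div s)" using d1(2) by (rule dvd_mult2)
  then have "5 dvd s * (r div s) + r mod s" using m5 by (rule dvd_add)
  then have "5 dvd r" by simp
  then have "is_unit (5::int)" using coprime_common_divisor[OF assms(2) _ d1(2)] by blast
  then show False by simp
qed

lemma L_cons: "snd (col1 (Mq z (c # cs))) = fst (col1 (Mq z cs))"
  by (simp only: col1_cons snd_conv)

lemma col1_nil: "col1 (Mq z []) = (1, 0)"
  by (simp add: col1_def mid_def)

lemma L_base1: "snd (col1 (Mq z [2])) = 1"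
  by (simp only: L_cons col1_nil fst_conv)

lemma F_single: "fst (col1 (Mq z [c])) = (\<Sum>i<nat c. z^i)"
  by (simp only: col1_cons col1_nil fst_conv snd_conv) simp

lemma L_base2: "snd (col1 (Mq z [2, 2])) = 1 + z"
proof -
  have "snd (col1 (Mq z [2, 2])) = (\<Sum>i<nat 2. z^i)" by (simp only: L_cons F_single)
  also have "\<dots> = 1 + z" by (simp add: eval_nat_numeral)
  finally show ?thesis .
qed

lemma L_base3: assumes z5: "z^5 = (1::complex)" and z1: "z \<noteq> 1"
  shows "snd (col1 (Mq z [2, 2, 3])) = z^2 * (1 - z^2)"
proof -
  have z0: "z \<noteq> 0" using z5 by auto
  have "snd (col1 (Mq z [2, 2, 3])) = fst (col1 (Mq z [2, 3]))" by (rule L_cons)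
  also have "\<dots> = (\<Sum>i<nat 2. z^i) * fst (col1 (Mq z [3])) - z^(nat 2) * inverse z * snd (col1 (Mq z [3]))"
    by (simp only: col1_cons fst_conv)
  also have "\<dots> = (1 + z) * (1 + z + z^2) - z"
  proof -
    have f3: "fst (col1 (Mq z [3])) = 1 + z + z^2" by (simp only: F_single) (simp add: eval_nat_numeral)
    have s3: "snd (col1 (Mq z [3])) = 1" by (simp only: L_cons col1_nil fst_conv)
    have g2: "(\<Sum>i<nat 2. z^i) = 1 + z" by (simp add: eval_nat_numeral)
    have p2: "z^(nat 2) * inverse z = z" using z0 by (simp add: eval_nat_numeral)
    show ?thesis unfolding f3 s3 g2 p2 by simp
  qed
  also have "\<dots> = z^2 * (1 - z^2) + (1 + z + z^2 + z^3 + z^4)"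
    by (simp add: algebra_simps eval_nat_numeral)
  also have "\<dots> = z^2 * (1 - z^2)" using zsum0[OF z5 z1] by simp
  finally show ?thesis .
qed

lemma core_int:
  assumes z5: "z^5 = (1::complex)" and z1: "z \<noteq> 1" and r: "0 < r" and s: "0 < s" and cop: "coprime r s"
  shows "\<exists>u\<in>UU z. S_rat z (of_int r / of_int s) = u * zev z (snd (Ftab (nat ((r mod s + 2*s) mod 5)) (nat (s mod 5))))
          \<and> nat ((r mod s + 2*s) mod 5) < 5 \<and> nat (s mod 5) < 5
          \<and> (nat ((r mod s + 2*s) mod 5), nat (s mod 5)) \<noteq> (0, 0)"
proof -
  obtain u where u: "u \<in> UU z" "S_rat z (of_int r / of_int s) = u * snd (FF z (r mod s + 2*s, s))"
    using S_rat_inv[OF z5 z1 r s cop] by blast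
  have nb: "\<not> ((r mod s + 2*s) mod 5 = 0 \<and> s mod 5 = 0)" by (rule not_both5[OF s cop])
  have "(nat ((r mod s + 2*s) mod 5), nat (s mod 5)) \<noteq> (0, 0)"
  proof
    assume "(nat ((r mod s + 2*s) mod 5), nat (s mod 5)) = (0, 0)"
    then have "(r mod s + 2*s) mod 5 \<le> 0" "s mod 5 \<le> 0" by simp_all
    moreover have "0 \<le> (r mod s + 2*s) mod 5" "0 \<le> s mod 5" by simp_all
    ultimately have "(r mod s + 2*s) mod 5 = 0" "s mod 5 = 0" by linarith+
    then show False using nb by simp
  qed
  moreover have "nat ((r mod s + 2*s) mod 5) < 5" "nat (s mod 5) < 5" by (simp_all add: nat_less_iff)
  moreover have "S_rat z (of_int r / of_int s) = u * zev z (snd (Ftab (nat ((r mod s + 2*s) mod 5)) (nat (s mod 5))))"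
    using u(2) unfolding FF_def by simp
  ultimately show ?thesis using u(1) by blast
qed

theorem corollary3p8:
  fixes \<zeta> :: complex
  assumes "\<zeta> ^ 5 = 1" and "\<forall>k\<in>{1..4::nat}. \<zeta> ^ k \<noteq> 1"
  shows "{S_rat \<zeta> x | x. x > 0} =
           {0} \<union> {c * t | c t. c \<in> {\<sigma> * \<zeta> ^ j | \<sigma> j. \<sigma> \<in> {1, -1} \<and> j < (5::nat)}
                          \<and> t \<in> {1, 1 + \<zeta>, 1 - \<zeta> ^ 2}}
         \<and> (\<forall>r s :: nat. 0 < r \<and> 0 < s \<and> coprime r s \<longrightarrow>
           (S_rat \<zeta> (of_nat r / of_nat s) = 0 \<longleftrightarrow>
              5 dvd s \<and> (r mod 5 = 1 \<or> r mod 5 = 4)))"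
proof -
  have z5: "\<zeta>^5 = 1" using assms(1) .
  have z1: "\<zeta> \<noteq> 1" using assms(2) by (metis atLeastAtMost_iff le_numeral_extra(4) one_le_numeral power_one_right)
  have z2: "\<zeta>^2 \<noteq> 1" using assms(2) by force
  have z0: "\<zeta> \<noteq> 0" using z5 by auto
  have UUeq: "{\<sigma> * \<zeta> ^ j | \<sigma> j. \<sigma> \<in> {1, -1} \<and> j < (5::nat)} = UU \<zeta>" unfolding UU_def by (rule refl)
  define T where "T = {c * t | c t. c \<in> UU \<zeta> \<and> t \<in> {1, 1 + \<zeta>, 1 - \<zeta> ^ 2}}"
  have UU_nz: "u \<noteq> 0" if "u \<in> UU \<zeta>" for u using that z0 unfolding UU_def by auto
  have part1: "{S_rat \<zeta> x | x. x > 0} = {0} \<union> T"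
  proof
    show "{S_rat \<zeta> x | x. x > 0} \<subseteq> {0} \<union> T"
    proof
      fix y assume "y \<in> {S_rat \<zeta> x | x. x > 0}"
      then obtain x where x: "y = S_rat \<zeta> x" "x > 0" by blast
      obtain r s where q: "quotient_of x = (r, s)" by (cases "quotient_of x") auto
      have s: "0 < s" by (rule quotient_of_denom_pos[OF q])
      have xe: "x = of_int r / of_int s" by (rule quotient_of_div[OF q])
      have cop: "coprime r s" by (rule quotient_of_coprime[OF q])
      have "0 < (of_int r :: rat)" using x(2) s unfolding xe by (simp add: zero_less_divide_iff)
      then have r: "0 < r" by simp
      obtain u where u: "u \<in> UU \<zeta>"
        "S_rat \<zeta> (of_int r / of_int s) = u * zev \<zeta> (snd (Ftab (nat ((r mod s + 2*s) mod 5)) (nat (s mod 5))))"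
        "nat ((r mod s + 2*s) mod 5) < 5" "nat (s mod 5) < 5"
        "(nat ((r mod s + 2*s) mod 5), nat (s mod 5)) \<noteq> (0, 0)"
        using core_int[OF z5 z1 r s cop] by blast
      define E where "E = zev \<zeta> (snd (Ftab (nat ((r mod s + 2*s) mod 5)) (nat (s mod 5))))"
      have E: "E \<in> {0} \<union> T" using chk2_sem[OF z5 z1 z2 u(3,4,5)] unfolding E_def T_def by blast
      have yE: "y = u * E" using x(1) u(2) unfolding xe E_def by simp
      show "y \<in> {0} \<union> T"
      proof (cases "E = 0")
        case True then show ?thesis using yE by simp
      next
        case False
        then obtain c t where ct: "E = c * t" "c \<in> UU \<zeta>" "t \<in> {1, 1 + \<zeta>, 1 - \<zeta> ^ 2}" using E unfolding T_def by blast
        have "u * c \<in> UU \<zeta>" by (rule UU_mult2[OF z5 u(1) ct(2)])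
        moreover have "y = (u * c) * t" using yE ct(1) by (simp add: mult.assoc)
        ultimately show ?thesis unfolding T_def using ct(3) by blast
      qed
    qed
  next
    show "{0} \<union> T \<subseteq> {S_rat \<zeta> x | x. x > 0}"
    proof
      fix y assume y: "y \<in> {0} \<union> T"
      have ex: "\<exists>x>0. S_rat \<zeta> x = y"
      proof (cases "y = 0")
        case True
        have h: "S_rat \<zeta> (hj_val (2 # 5 # [])) = - inverse \<zeta> * snd (col1 (Mq \<zeta> [])) \<and> hj_val (2 # 5 # []) > 0"
          by (rule S_rat_25[OF z5 z1]) simp
        then show ?thesis using True by (intro exI[of _ "hj_val [2, 5]"]) (simp add: col1_def mid_def)
      next
        case False
        then obtain c t where ct: "y = c * t" "c \<in> UU \<zeta>" "t \<in> {1, 1 + \<zeta>, 1 - \<zeta> ^ 2}" using y unfolding T_def by blast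
        consider "t = 1" | "t = 1 + \<zeta>" | "t = 1 - \<zeta>^2" using ct(3) by blast
        then show ?thesis
        proof cases
          case 1
          obtain x where "x > 0" "S_rat \<zeta> x = c * snd (col1 (Mq \<zeta> [2]))" using attain[OF z5 z1 ct(2), of "[2]"] by auto
          then show ?thesis using ct(1) 1 L_base1 by auto
        next
          case 2
          obtain x where "x > 0" "S_rat \<zeta> x = c * snd (col1 (Mq \<zeta> [2, 2]))" using attain[OF z5 z1 ct(2), of "[2, 2]"] by auto
          then show ?thesis using ct(1) 2 L_base2 by auto
        next
          case 3
          have cz: "c * \<zeta>^3 \<in> UU \<zeta>"
          proof -
            have "\<zeta>^3 \<in> UU \<zeta>" unfolding UU_def by (rule CollectI, rule exI[of _ 1], rule exI[of _ 3]) simp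
            then show ?thesis by (rule UU_mult2[OF z5 ct(2)])
          qed
          obtain x where x: "x > 0" "S_rat \<zeta> x = (c * \<zeta>^3) * snd (col1 (Mq \<zeta> [2, 2, 3]))"
            using attain[OF z5 z1 cz, of "[2, 2, 3]"] by auto
          have "(c * \<zeta>^3) * snd (col1 (Mq \<zeta> [2, 2, 3])) = c * (\<zeta>^5 * (1 - \<zeta>^2))"
            unfolding L_base3[OF z5 z1] by (simp add: algebra_simps eval_nat_numeral)
          also have "\<dots> = y" using ct(1) 3 z5 by simp
          finally show ?thesis using x by auto
        qed
      qed
      then show "y \<in> {S_rat \<zeta> x | x. x > 0}" by auto
    qed
  qed
  have part2: "\<forall>r s :: nat. 0 < r \<and> 0 < s \<and> coprime r s \<longrightarrow>
           (S_rat \<zeta> (of_nat r / of_nat s) = 0 \<longleftrightarrow> 5 dvd s \<and> (r mod 5 = 1 \<or> r mod 5 = 4))"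
  proof (intro allI impI)
    fix r s :: nat
    assume h: "0 < r \<and> 0 < s \<and> coprime r s"
    define ri where "ri = int r"
    define si where "si = int s"
    have ri: "0 < ri" and si: "0 < si" using h unfolding ri_def si_def by simp_all
    have copi: "coprime ri si" using h unfolding ri_def si_def by (simp add: coprime_int_iff)
    have xe: "(of_nat r / of_nat s :: rat) = of_int ri / of_int si" unfolding ri_def si_def by simp
    obtain u where u: "u \<in> UU \<zeta>"
        "S_rat \<zeta> (of_int ri / of_int si) = u * zev \<zeta> (snd (Ftab (nat ((ri mod si + 2*si) mod 5)) (nat (si mod 5))))"
        "nat ((ri mod si + 2*si) mod 5) < 5" "nat (si mod 5) < 5"
        "(nat ((ri mod si + 2*si) mod 5), nat (si mod 5)) \<noteq> (0, 0)"
      using core_int[OF z5 z1 ri si copi] by blast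
    define a where "a = nat ((ri mod si + 2*si) mod 5)"
    define b where "b = nat (si mod 5)"
    have sem: "zev \<zeta> (snd (Ftab a b)) = 0 \<longleftrightarrow> b = 0 \<and> (a = 1 \<or> a = 4)"
      using chk2_sem[OF z5 z1 z2 u(3,4,5)] unfolding a_def b_def by blast
    have S0: "S_rat \<zeta> (of_nat r / of_nat s) = 0 \<longleftrightarrow> zev \<zeta> (snd (Ftab a b)) = 0"
      using u(2) UU_nz[OF u(1)] unfolding xe a_def b_def by simp
    have nm: "nat (int n mod 5) = n mod 5" for n :: nat
    proof -
      have "int n mod 5 = int (n mod 5)" by (simp add: zmod_int)
      then show ?thesis by simp
    qed
    have bs: "b = s mod 5" unfolding b_def si_def by (rule nm)
    have b0: "b = 0 \<longleftrightarrow> 5 dvd s" unfolding bs by auto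
    have ar: "a = r mod 5" if s5: "5 dvd s"
    proof -
      from s5 obtain k where "s = 5 * k" by (rule dvdE)
      then have k: "si = 5 * int k" unfolding si_def by simp
      define q where "q = ri div si"
      have m: "ri mod si = ri - q * si" unfolding q_def using div_mult_mod_eq[of ri si] by linarith
      have "ri - q * si + 2*si = ri + 5 * (int k * (2 - q))" unfolding k by (simp add: algebra_simps)
      then have "ri mod si + 2*si = ri + 5 * (int k * (2 - q))" unfolding m .
      then have "(ri mod si + 2*si) mod 5 = ri mod 5" by simp
      then show ?thesis unfolding a_def ri_def using nm[of r] by simp
    qed
    show "S_rat \<zeta> (of_nat r / of_nat s) = 0 \<longleftrightarrow> 5 dvd s \<and> (r mod 5 = 1 \<or> r mod 5 = 4)"
      using S0 sem b0 ar by auto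
  qed
  show ?thesis using part1 part2 unfolding UUeq T_def by simp
qed

end
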